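(* Let $S$ be a finite generating subset of a group $G$ with $1\in S$, such that $S$ is $k$-separable. Let $H$ be a $k$-atom of $S$ with $1\in H$. Assume that either $G$ is infinite or $\alpha_k(S)\le\alpha_{-k}(S)$. If $|\Pi^r(H)|\ge k$, then $H$ is a subgroup of $G$.
   Context: For a group $G$ and $S\subseteq G$, the Cayley graph $\mathrm{Cay}(G,S)$ has vertex set $G$ and arcs $(x,y)$ with $x^{-1}y\in S$; so the image of $X\subseteq G$ is $XS$. For a graph $\Gamma=(V,E)$ (reflexive, locally finite), $\partial(X)=\Gamma(X)\setminus X$; $\Gamma$ is $k$-separable if some finite $X$ has $|X|\ge k$ and $|V\setminus\Gamma(X)|\ge k$; then $\kappa_k(\Gamma)=\min\{|\partial(X)|: X\text{ finite},|X|\ge k,|V\setminus\Gamma(X)|\ge k\}$, a $k$-fragment is such an $X$ attaining the minimum, a $k$-atom is a $k$-fragment of minimum cardinality, $\alpha_k(\Gamma)$ its cardinality. For $S$ with $1\in S$, $k$-fragments, $k$-atoms, $\kappa_k(S)$, $\alpha_k(S)$ refer to $\mathrm{Cay}(\langle S\rangle,S)$ ($\langle S\rangle$ the generated subgroup), $S$ is $k$-separable if this graph is, and $\alpha_{-k}(S)=\alpha_k(\mathrm{Cay}(\langle S\rangle,S^{-1}))$. $\Pi^r(X)=\{x\in G: Xx=X\}$. *)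

theory Defs
  imports "HOL-Algebra.Algebra"
begin

text \<open>Cayley graph Cay(<S>, S): vertex set generate Gr S, image of A is A S (set product).
  All notions below are relative to the group Gr (an HOL-Algebra group structure).\<close>

definition cay_vertices :: "('a, 'b) monoid_scheme \<Rightarrow> 'a set \<Rightarrow> 'a set" where
  "cay_vertices Gr S = generate Gr S"

definition cay_image :: "('a, 'b) monoid_scheme \<Rightarrow> 'a set \<Rightarrow> 'a set \<Rightarrow> 'a set" where
  "cay_image Gr S A = set_mult Gr A S"

definition cay_boundary :: "('a, 'b) monoid_scheme \<Rightarrow> 'a set \<Rightarrow> 'a set \<Rightarrow> 'a set" where
  "cay_boundary Gr S A = cay_image Gr S A - A"

definition card_ge :: "'a set \<Rightarrow> nat \<Rightarrow> bool" where
  "card_ge A k \<longleftrightarrow> infinite A \<or> k \<le> card A"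

definition k_admissible :: "('a, 'b) monoid_scheme \<Rightarrow> 'a set \<Rightarrow> nat \<Rightarrow> 'a set \<Rightarrow> bool" where
  "k_admissible Gr S k A \<longleftrightarrow> A \<subseteq> cay_vertices Gr S \<and> finite A \<and> k \<le> card A \<and>
     card_ge (cay_vertices Gr S - cay_image Gr S A) k"

definition k_separable :: "('a, 'b) monoid_scheme \<Rightarrow> 'a set \<Rightarrow> nat \<Rightarrow> bool" where
  "k_separable Gr S k \<longleftrightarrow> (\<exists>A. k_admissible Gr S k A)"

definition kappa :: "('a, 'b) monoid_scheme \<Rightarrow> 'a set \<Rightarrow> nat \<Rightarrow> nat" where
  "kappa Gr S k = (LEAST n. \<exists>A. k_admissible Gr S k A \<and> card (cay_boundary Gr S A) = n)"

definition k_fragment :: "('a, 'b) monoid_scheme \<Rightarrow> 'a set \<Rightarrow> nat \<Rightarrow> 'a set \<Rightarrow> bool" where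
  "k_fragment Gr S k A \<longleftrightarrow> k_admissible Gr S k A \<and> card (cay_boundary Gr S A) = kappa Gr S k"

definition k_atom :: "('a, 'b) monoid_scheme \<Rightarrow> 'a set \<Rightarrow> nat \<Rightarrow> 'a set \<Rightarrow> bool" where
  "k_atom Gr S k A \<longleftrightarrow> k_fragment Gr S k A \<and> (\<forall>B. k_fragment Gr S k B \<longrightarrow> card A \<le> card B)"

definition alpha :: "('a, 'b) monoid_scheme \<Rightarrow> 'a set \<Rightarrow> nat \<Rightarrow> nat" where
  "alpha Gr S k = (LEAST n. \<exists>A. k_fragment Gr S k A \<and> card A = n)"

definition alpha_neg :: "('a, 'b) monoid_scheme \<Rightarrow> 'a set \<Rightarrow> nat \<Rightarrow> nat" where
  "alpha_neg Gr S k = alpha Gr ((\<lambda>s. m_inv Gr s) ` S) k"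

definition Pi_r :: "('a, 'b) monoid_scheme \<Rightarrow> 'a set \<Rightarrow> 'a set" where
  "Pi_r Gr A = {x \<in> carrier Gr. r_coset Gr A x = A}"

end

theory Submission
  imports Defs
begin


lemma submod_card:
  assumes "finite P" "finite Q"
  shows "card ((P\<inter>Q) - (Xa\<inter>Ya)) + card ((P\<union>Q) - (Xa\<union>Ya)) \<le> card (P - Xa) + card (Q - Ya)"
proof -
  let ?L1 = "(P\<inter>Q) - (Xa\<inter>Ya)" and ?L2 = "(P\<union>Q) - (Xa\<union>Ya)" and ?U = "P - Xa" and ?W = "Q - Ya"
  have f: "finite ?L1" "finite ?L2" "finite ?U" "finite ?W" using assms by auto
  have "card ?L1 + card ?L2 = card (?L1 \<union> ?L2) + card (?L1 \<inter> ?L2)" using card_Un_Int f by blast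
  also have "\<dots> \<le> card (?U \<union> ?W) + card (?U \<inter> ?W)"
  proof (rule add_mono)
    have "?L1 \<union> ?L2 \<subseteq> ?U \<union> ?W" by blast
    then show "card (?L1 \<union> ?L2) \<le> card (?U \<union> ?W)" using f by (intro card_mono) auto
    have "?L1 \<inter> ?L2 \<subseteq> ?U \<inter> ?W" by blast
    then show "card (?L1 \<inter> ?L2) \<le> card (?U \<inter> ?W)" using f by (intro card_mono) auto
  qed
  also have "\<dots> = card ?U + card ?W" using card_Un_Int f by metis
  finally show ?thesis .
qed

lemma card_ge_mono: "card_ge A k \<Longrightarrow> A \<subseteq> B \<Longrightarrow> card_ge B k"
  unfolding card_ge_def by (meson card_mono finite_subset le_trans)

context group begin

lemma sm_sub: "A \<subseteq> carrier G \<Longrightarrow> S \<subseteq> carrier G \<Longrightarrow> set_mult G A S \<subseteq> carrier G"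
  unfolding set_mult_def by auto

lemma sm_mem: "a \<in> A \<Longrightarrow> s \<in> S \<Longrightarrow> a \<otimes> s \<in> set_mult G A S"
  unfolding set_mult_def by auto

lemma sm_memE: "x \<in> set_mult G A S \<Longrightarrow> (\<And>a s. a \<in> A \<Longrightarrow> s \<in> S \<Longrightarrow> x = a \<otimes> s \<Longrightarrow> P) \<Longrightarrow> P"
  unfolding set_mult_def by auto

lemma sm_self: "A \<subseteq> carrier G \<Longrightarrow> \<one> \<in> S \<Longrightarrow> A \<subseteq> set_mult G A S"
proof
  fix a assume "A \<subseteq> carrier G" "\<one> \<in> S" "a \<in> A"
  then have "a \<otimes> \<one> \<in> set_mult G A S" by (intro sm_mem)
  then show "a \<in> set_mult G A S" using \<open>A \<subseteq> carrier G\<close> \<open>a \<in> A\<close> by auto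
qed

lemma sm_finite: "finite A \<Longrightarrow> finite S \<Longrightarrow> finite (set_mult G A S)"
  unfolding set_mult_def by auto

lemma sm_Un: "set_mult G (A \<union> B) S = set_mult G A S \<union> set_mult G B S"
  unfolding set_mult_def by auto

lemma sm_Int: "set_mult G (A \<inter> B) S \<subseteq> set_mult G A S \<inter> set_mult G B S"
  unfolding set_mult_def by auto

lemma sm_translate:
  assumes "g \<in> carrier G" "A \<subseteq> carrier G" "S \<subseteq> carrier G"
  shows "set_mult G ((\<lambda>x. g \<otimes> x) ` A) S = (\<lambda>x. g \<otimes> x) ` set_mult G A S"
proof (intro equalityI subsetI)
  fix y assume "y \<in> set_mult G ((\<lambda>x. g \<otimes> x) ` A) S"
  then obtain b s where b: "b \<in> (\<lambda>x. g \<otimes> x) ` A" "s \<in> S" "y = b \<otimes> s" by (rule sm_memE)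
  then obtain a where a: "a \<in> A" "b = g \<otimes> a" by blast
  have ac: "a \<in> carrier G" "s \<in> carrier G" using assms(2,3) a(1) b(2) by auto
  have y: "y = g \<otimes> (a \<otimes> s)" using ac assms(1) b(3) a(2) by (simp add: m_assoc)
  have "a \<otimes> s \<in> set_mult G A S" using a(1) b(2) by (rule sm_mem)
  then show "y \<in> (\<lambda>x. g \<otimes> x) ` set_mult G A S" using y by blast
next
  fix y assume "y \<in> (\<lambda>x. g \<otimes> x) ` set_mult G A S"
  then obtain b where b: "b \<in> set_mult G A S" "y = g \<otimes> b" by blast
  from b(1) obtain a s where a: "a \<in> A" "s \<in> S" "b = a \<otimes> s" by (rule sm_memE)
  have ac: "a \<in> carrier G" "s \<in> carrier G" using assms(2,3) a(1,2) by auto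
  have y: "y = (g \<otimes> a) \<otimes> s" using ac assms(1) b(2) a(3) by (simp add: m_assoc)
  have "g \<otimes> a \<in> (\<lambda>x. g \<otimes> x) ` A" using a(1) by blast
  then have "(g \<otimes> a) \<otimes> s \<in> set_mult G ((\<lambda>x. g \<otimes> x) ` A) S" using a(2) by (rule sm_mem)
  then show "y \<in> set_mult G ((\<lambda>x. g \<otimes> x) ` A) S" using y by simp
qed

lemma dual_disjoint:
  assumes "T \<subseteq> carrier G" "Xa \<subseteq> carrier G"
  shows "Xa \<inter> set_mult G (carrier G - set_mult G Xa T) (m_inv G ` T) = {}"
proof (rule ccontr)
  assume "Xa \<inter> set_mult G (carrier G - set_mult G Xa T) (m_inv G ` T) \<noteq> {}"
  then obtain x where x: "x \<in> Xa" "x \<in> set_mult G (carrier G - set_mult G Xa T) (m_inv G ` T)" by blast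
  from x(2) obtain z t' where zt0: "z \<in> carrier G - set_mult G Xa T" "t' \<in> m_inv G ` T" "x = z \<otimes> t'"
    by (rule sm_memE)
  then obtain t where zt: "z \<in> carrier G" "z \<notin> set_mult G Xa T" "t \<in> T" "x = z \<otimes> inv t"
    by blast
  have "x \<otimes> t = z" using zt assms by (simp add: m_assoc subsetD)
  moreover have "x \<otimes> t \<in> set_mult G Xa T" using x zt by (intro sm_mem)
  ultimately show False using zt by simp
qed

lemma gen_inv:
  assumes "T \<subseteq> carrier G" "generate G T = carrier G"
  shows "generate G (m_inv G ` T) = carrier G"
proof -
  have sub: "m_inv G ` T \<subseteq> carrier G" using assms(1) by auto
  have "T \<subseteq> generate G (m_inv G ` T)"
  proof
    fix t assume "t \<in> T"
    then have "inv t \<in> generate G (m_inv G ` T)" by (intro generate.incl) auto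
    then have "inv (inv t) \<in> generate G (m_inv G ` T)" by (rule generate_m_inv_closed[OF sub])
    then show "t \<in> generate G (m_inv G ` T)" using \<open>t \<in> T\<close> assms(1) by (simp add: subsetD)
  qed
  then have "generate G T \<subseteq> generate G (m_inv G ` T)"
    by (rule generate_subgroup_incl[OF _ generate_is_subgroup[OF sub]])
  then have "carrier G \<subseteq> generate G (m_inv G ` T)" using assms(2) by simp
  then show ?thesis using generate_incl[OF sub] by (rule equalityI[rotated])
qed

lemma inv_inv_img: assumes "T \<subseteq> carrier G" shows "m_inv G ` (m_inv G ` T) = T"
proof
  show "m_inv G ` (m_inv G ` T) \<subseteq> T"
  proof
    fix x assume "x \<in> m_inv G ` (m_inv G ` T)"
    then obtain t where "t \<in> T" "x = inv (inv t)" by blast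
    then show "x \<in> T" using assms by (simp add: subsetD)
  qed
  show "T \<subseteq> m_inv G ` (m_inv G ` T)"
  proof
    fix t assume "t \<in> T"
    then have "t = inv (inv t)" using assms by (simp add: subsetD)
    then show "t \<in> m_inv G ` (m_inv G ` T)" using \<open>t \<in> T\<close> by blast
  qed
qed

end


lemma kappa_le: "k_admissible Gr S k Xa \<Longrightarrow> kappa Gr S k \<le> card (cay_boundary Gr S Xa)"
  unfolding kappa_def by (rule Least_le) blast

lemma kappa_ex: "k_admissible Gr S k Xa \<Longrightarrow> \<exists>Ya. k_admissible Gr S k Ya \<and> card (cay_boundary Gr S Ya) = kappa Gr S k"
  unfolding kappa_def by (rule LeastI_ex) blast

lemma alpha_atom: "k_atom Gr S k A \<Longrightarrow> alpha Gr S k = card A"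
  unfolding alpha_def k_atom_def by (rule Least_equality) auto

lemma alpha_le: "k_fragment Gr S k A \<Longrightarrow> alpha Gr S k \<le> card A"
  unfolding alpha_def by (rule Least_le) blast

context group begin

lemma translate_adm:
  assumes "g \<in> carrier G" "S \<subseteq> carrier G" "cay_vertices G S = carrier G" "k_admissible G S k A"
  shows "k_admissible G S k ((\<lambda>x. g \<otimes> x) ` A) \<and>
         card (cay_boundary G S ((\<lambda>x. g \<otimes> x) ` A)) = card (cay_boundary G S A)"
proof -
  let ?f = "\<lambda>x. g \<otimes> x"
  have A: "A \<subseteq> carrier G" "finite A" "k \<le> card A" "card_ge (carrier G - set_mult G A S) k"
    using assms(3,4) unfolding k_admissible_def cay_image_def by auto
  have inj: "inj_on ?f (carrier G)" using assms(1) by (intro inj_onI) simp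
  have fc: "?f ` carrier G = carrier G"
  proof (intro equalityI subsetI)
    fix x assume "x \<in> ?f ` carrier G" then show "x \<in> carrier G" using assms(1) by auto
  next
    fix x assume x: "x \<in> carrier G"
    then have "x = ?f (inv g \<otimes> x)" using assms(1) by (simp add: m_assoc[symmetric])
    then show "x \<in> ?f ` carrier G" using x assms(1) by blast
  qed
  have AS: "set_mult G A S \<subseteq> carrier G" using A(1) assms(2) by (rule sm_sub)
  have im: "set_mult G (?f ` A) S = ?f ` set_mult G A S" using assms(1) A(1) assms(2) by (rule sm_translate)
  have cA: "card (?f ` A) = card A" using inj A(1) by (metis card_image inj_on_subset)
  have diff: "carrier G - set_mult G (?f ` A) S = ?f ` (carrier G - set_mult G A S)"
    unfolding im using inj_on_image_set_diff[OF inj, of "carrier G" "set_mult G A S"] AS fc by auto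
  have injd: "inj_on ?f (carrier G - set_mult G A S)" using inj by (rule inj_on_subset) auto
  have cg: "card_ge (carrier G - set_mult G (?f ` A) S) k"
    unfolding diff card_ge_def
    using A(4) injd unfolding card_ge_def by (simp add: card_image finite_image_iff)
  have bd: "cay_boundary G S (?f ` A) = ?f ` (set_mult G A S - A)"
    unfolding cay_boundary_def cay_image_def im
    using inj_on_image_set_diff[OF inj, of "set_mult G A S" A] AS A(1) by auto
  have cb: "card (cay_boundary G S (?f ` A)) = card (cay_boundary G S A)"
    unfolding bd unfolding cay_boundary_def cay_image_def
    using inj AS by (metis Diff_subset card_image inj_on_subset)
  have "?f ` A \<subseteq> carrier G" using A(1) assms(1) by auto
  then have "k_admissible G S k (?f ` A)"
    unfolding k_admissible_def cay_image_def assms(3) using A cA cg by auto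
  then show ?thesis using cb by blast
qed

lemma translate_atom:
  assumes "g \<in> carrier G" "S \<subseteq> carrier G" "cay_vertices G S = carrier G" "k_atom G S k A"
  shows "k_atom G S k ((\<lambda>x. g \<otimes> x) ` A)"
proof -
  have adm: "k_admissible G S k A" "card (cay_boundary G S A) = kappa G S k"
    using assms(4) unfolding k_atom_def k_fragment_def by auto
  have "A \<subseteq> carrier G" using adm(1) assms(3) unfolding k_admissible_def by auto
  then have cA: "card ((\<lambda>x. g \<otimes> x) ` A) = card A"
    using assms(1) by (intro card_image inj_onI) (metis l_cancel subsetD)
  show ?thesis using translate_adm[OF assms(1-3) adm(1)] adm(2) assms(4) cA
    unfolding k_atom_def k_fragment_def by auto
qed

lemma dual_adm:
  assumes "T \<subseteq> carrier G" "cay_vertices G T = carrier G" "finite (carrier G)" "k_admissible G T k Xa"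
  shows "k_admissible G (m_inv G ` T) k (carrier G - set_mult G Xa T) \<and>
     card (cay_boundary G (m_inv G ` T) (carrier G - set_mult G Xa T)) \<le> card (cay_boundary G T Xa)"
proof -
  let ?D = "carrier G - set_mult G Xa T" and ?T' = "m_inv G ` T"
  have X: "Xa \<subseteq> carrier G" "finite Xa" "k \<le> card Xa" "card_ge ?D k"
    using assms(2,4) unfolding k_admissible_def cay_image_def by auto
  have gv: "cay_vertices G ?T' = carrier G"
    using gen_inv[OF assms(1)] assms(2) unfolding cay_vertices_def by simp
  have T': "?T' \<subseteq> carrier G" using assms(1) by auto
  have XT: "set_mult G Xa T \<subseteq> carrier G" using X(1) assms(1) by (rule sm_sub)
  have DT: "set_mult G ?D ?T' \<subseteq> carrier G" using T' by (intro sm_sub) auto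
  have disj: "Xa \<inter> set_mult G ?D ?T' = {}" using assms(1) X(1) by (rule dual_disjoint)
  have sub1: "Xa \<subseteq> carrier G - set_mult G ?D ?T'" using disj X(1) by blast
  have "card Xa \<le> card (carrier G - set_mult G ?D ?T')" using sub1 assms(3) by (intro card_mono) auto
  then have cg: "card_ge (carrier G - set_mult G ?D ?T') k" using X(3) unfolding card_ge_def by simp
  have kD: "k \<le> card ?D" using X(4) assms(3) unfolding card_ge_def by auto
  have adm: "k_admissible G ?T' k ?D"
    unfolding k_admissible_def cay_image_def gv using cg kD assms(3) by auto
  have "cay_boundary G ?T' ?D \<subseteq> cay_boundary G T Xa"
    unfolding cay_boundary_def cay_image_def using disj DT by blast
  then have "card (cay_boundary G ?T' ?D) \<le> card (cay_boundary G T Xa)"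
    using assms(3) XT unfolding cay_boundary_def cay_image_def by (intro card_mono) (auto intro: finite_subset)
  then show ?thesis using adm by blast
qed

lemma kappa_inv:
  assumes "T \<subseteq> carrier G" "cay_vertices G T = carrier G" "finite (carrier G)" "k_admissible G T k A0"
  shows "kappa G (m_inv G ` T) k = kappa G T k"
proof -
  let ?T' = "m_inv G ` T"
  have T': "?T' \<subseteq> carrier G" using assms(1) by auto
  have gv: "cay_vertices G ?T' = carrier G"
    using gen_inv[OF assms(1)] assms(2) unfolding cay_vertices_def by simp
  obtain A where A: "k_admissible G T k A" "card (cay_boundary G T A) = kappa G T k"
    using kappa_ex[OF assms(4)] by blast
  from dual_adm[OF assms(1-3) A(1)] have d: "k_admissible G ?T' k (carrier G - set_mult G A T)"
    "card (cay_boundary G ?T' (carrier G - set_mult G A T)) \<le> kappa G T k" using A(2) by auto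
  have le1: "kappa G ?T' k \<le> kappa G T k" using kappa_le[OF d(1)] d(2) by linarith
  obtain B where B: "k_admissible G ?T' k B" "card (cay_boundary G ?T' B) = kappa G ?T' k"
    using kappa_ex[OF d(1)] by blast
  from dual_adm[OF T' gv assms(3) B(1)] have e: "k_admissible G T k (carrier G - set_mult G B ?T')"
    "card (cay_boundary G T (carrier G - set_mult G B ?T')) \<le> kappa G ?T' k"
    using B(2) inv_inv_img[OF assms(1)] by auto
  have le2: "kappa G T k \<le> kappa G ?T' k" using kappa_le[OF e(1)] e(2) by linarith
  show ?thesis using le1 le2 by simp
qed

end


context group begin

lemma atom_inter:
  assumes S: "S \<subseteq> carrier G" "finite S" "cay_vertices G S = carrier G" "\<one> \<in> S"
    and cond: "infinite (carrier G) \<or> alpha G S k \<le> alpha_neg G S k"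
    and A: "k_atom G S k A" and B: "k_fragment G S k B" and cB: "card B = card A"
    and AB: "k \<le> card (A \<inter> B)"
  shows "A \<subseteq> B"
proof -
  let ?k = "kappa G S k"
  have Aa: "k_admissible G S k A" "card (cay_boundary G S A) = ?k"
    using A unfolding k_atom_def k_fragment_def by auto
  have Ba: "k_admissible G S k B" "card (cay_boundary G S B) = ?k"
    using B unfolding k_fragment_def by auto
  have Ac: "A \<subseteq> carrier G" "finite A" "k \<le> card A" "card_ge (carrier G - set_mult G A S) k"
    using Aa(1) S(3) unfolding k_admissible_def cay_image_def by auto
  have Bc: "B \<subseteq> carrier G" "finite B" "k \<le> card B" "card_ge (carrier G - set_mult G B S) k"
    using Ba(1) S(3) unfolding k_admissible_def cay_image_def by auto
  have ABS: "set_mult G (A \<union> B) S = set_mult G A S \<union> set_mult G B S" by (rule sm_Un)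
  have ASc: "set_mult G A S \<subseteq> carrier G" using Ac(1) S(1) by (rule sm_sub)
  have BSc: "set_mult G B S \<subseteq> carrier G" using Bc(1) S(1) by (rule sm_sub)
  have ASf: "finite (set_mult G A S)" using Ac(2) S(2) by (rule sm_finite)
  have BSf: "finite (set_mult G B S)" using Bc(2) S(2) by (rule sm_finite)
  have cgU: "card_ge (carrier G - set_mult G (A \<union> B) S) k"
  proof (cases "finite (carrier G)")
    case False
    then show ?thesis unfolding card_ge_def ABS using ASf BSf by (intro disjI1 Diff_infinite_finite) auto
  next
    case fin: True
    let ?T = "m_inv G ` S"
    let ?As = "carrier G - set_mult G A S" and ?Bs = "carrier G - set_mult G B S"
    have alpha_cmp: "card A \<le> alpha G ?T k"
      using cond fin alpha_atom[OF A] unfolding alpha_neg_def by simp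
    have kT: "kappa G ?T k = ?k" using kappa_inv[OF S(1) S(3) fin Aa(1)] .
    have T': "?T \<subseteq> carrier G" using S(1) by auto
    have dA: "k_admissible G ?T k ?As" "card (cay_boundary G ?T ?As) \<le> ?k"
      using dual_adm[OF S(1) S(3) fin Aa(1)] Aa(2) by auto
    have dB: "k_admissible G ?T k ?Bs" "card (cay_boundary G ?T ?Bs) \<le> ?k"
      using dual_adm[OF S(1) S(3) fin Ba(1)] Ba(2) by auto
    have fA: "k_fragment G ?T k ?As" using dA kappa_le[OF dA(1)] kT unfolding k_fragment_def by simp
    have fB: "k_fragment G ?T k ?Bs" using dB kappa_le[OF dB(1)] kT unfolding k_fragment_def by simp
    have cAs: "card A \<le> card ?As" using alpha_le[OF fA] alpha_cmp by simp
    have cBs: "card A \<le> card ?Bs" using alpha_le[OF fB] alpha_cmp by simp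
    have gv: "cay_vertices G ?T = carrier G"
      using gen_inv[OF S(1)] S(3) unfolding cay_vertices_def by simp
    have disA: "A \<inter> set_mult G ?As ?T = {}" using S(1) Ac(1) by (rule dual_disjoint)
    have disB: "B \<inter> set_mult G ?Bs ?T = {}" using S(1) Bc(1) by (rule dual_disjoint)
    let ?U = "?As \<union> ?Bs"
    have UT: "set_mult G ?U ?T = set_mult G ?As ?T \<union> set_mult G ?Bs ?T" by (rule sm_Un)
    have UTc: "set_mult G ?U ?T \<subseteq> carrier G" using T' by (intro sm_sub) auto
    have IU: "A \<inter> B \<subseteq> carrier G - set_mult G ?U ?T" using disA disB Ac(1) unfolding UT by blast
    have "card (A \<inter> B) \<le> card (carrier G - set_mult G ?U ?T)" using IU fin by (intro card_mono) auto
    then have cgUs: "card_ge (carrier G - cay_image G ?T ?U) k" using AB unfolding card_ge_def cay_image_def by simp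
    have "card ?As \<le> card ?U" using fin by (intro card_mono) auto
    then have kU: "k \<le> card ?U" using cAs Ac(3) by linarith
    have admU: "k_admissible G ?T k ?U" unfolding k_admissible_def gv using kU cgUs fin by auto
    have bU: "?k \<le> card (cay_boundary G ?T ?U)" using kappa_le[OF admU] kT by simp
    have bsub: "cay_boundary G ?T ?U \<subseteq> carrier G - (?U \<union> (A \<inter> B))"
      unfolding cay_boundary_def cay_image_def using UTc IU by blast
    have c1: "card (cay_boundary G ?T ?U) \<le> card (carrier G - (?U \<union> (A \<inter> B)))"
      using bsub fin by (intro card_mono) auto
    have UIc: "?U \<union> (A \<inter> B) \<subseteq> carrier G" using Ac(1) by blast
    have c2: "card (carrier G - (?U \<union> (A \<inter> B))) = card (carrier G) - card (?U \<union> (A \<inter> B))"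
      using fin UIc by (intro card_Diff_subset) (auto intro: finite_subset)
    have dj: "?U \<inter> (A \<inter> B) = {}" using sm_self[OF Ac(1) S(4)] sm_self[OF Bc(1) S(4)] by blast
    have c3: "card (?U \<union> (A \<inter> B)) = card ?U + card (A \<inter> B)"
      using fin Ac(1) dj by (intro card_Un_disjoint) (auto intro: finite_subset)
    have c4: "card (?U \<union> (A \<inter> B)) \<le> card (carrier G)" using fin UIc by (intro card_mono) auto
    have e1: "?k + card ?U + card (A \<inter> B) \<le> card (carrier G)" using bU c1 c2 c3 c4 by linarith
    have e2: "card ?U + card (?As \<inter> ?Bs) = card ?As + card ?Bs"
      using fin by (intro card_Un_Int[symmetric]) auto
    have "card (set_mult G A S - A) = card (set_mult G A S) - card A"
      using Ac(2) sm_self[OF Ac(1) S(4)] by (intro card_Diff_subset)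
    then have e3: "card (set_mult G A S) = card A + ?k"
      using Aa(2) card_mono[OF ASf sm_self[OF Ac(1) S(4)]] unfolding cay_boundary_def cay_image_def by linarith
    have e4: "card ?As + card (set_mult G A S) = card (carrier G)"
      using card_Diff_subset[OF ASf ASc] card_mono[OF fin ASc] by linarith
    have "card (?As \<inter> ?Bs) \<ge> k" using e1 e2 e3 e4 cBs AB by linarith
    moreover have "?As \<inter> ?Bs = carrier G - set_mult G (A \<union> B) S" unfolding ABS by blast
    ultimately show ?thesis unfolding card_ge_def by simp
  qed
  have admU: "k_admissible G S k (A \<union> B)"
    unfolding k_admissible_def cay_image_def S(3) using Ac Bc cgU card_mono[of "A \<union> B" A] by auto
  have kU: "?k \<le> card (cay_boundary G S (A \<union> B))" by (rule kappa_le[OF admU])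
  have sm: "card ((set_mult G A S \<inter> set_mult G B S) - (A \<inter> B)) + card ((set_mult G A S \<union> set_mult G B S) - (A \<union> B))
     \<le> card (set_mult G A S - A) + card (set_mult G B S - B)" using ASf BSf by (rule submod_card)
  have "card (cay_boundary G S (A \<inter> B)) \<le> card ((set_mult G A S \<inter> set_mult G B S) - (A \<inter> B))"
    unfolding cay_boundary_def cay_image_def using sm_Int[of A B S] ASf by (intro card_mono) auto
  then have kI: "card (cay_boundary G S (A \<inter> B)) \<le> ?k"
    using sm kU Aa(2) Ba(2) unfolding cay_boundary_def cay_image_def ABS by linarith
  have cgI: "card_ge (carrier G - set_mult G (A \<inter> B) S) k"
    using Ac(4) by (rule card_ge_mono) (use sm_Int[of A B S] in blast)
  have admI: "k_admissible G S k (A \<inter> B)"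
    unfolding k_admissible_def cay_image_def S(3) using Ac AB cgI by auto
  have "k_fragment G S k (A \<inter> B)" using kappa_le[OF admI] kI admI unfolding k_fragment_def by simp
  then have "card A \<le> card (A \<inter> B)" using A unfolding k_atom_def by blast
  then have "A \<inter> B = A" using Ac(2) by (intro card_seteq) auto
  then show ?thesis by blast
qed

end


lemma (in group) main_aux:
  fixes S H :: "'a set" and k :: nat
  assumes "True"
    and "finite S" and "S \<subseteq> carrier G" and "generate G S = carrier G"
    and "\<one> \<in> S"
    and "k_separable G S k"
    and "k_atom G S k H" and "\<one> \<in> H"
    and "infinite (carrier G) \<or> alpha G S k \<le> alpha_neg G S k"
    and "k \<le> card (Pi_r G H)"
  shows "subgroup H G"
proof -
  have cv: "cay_vertices G S = carrier G" unfolding cay_vertices_def by (rule assms(4))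
  have Hc: "H \<subseteq> carrier G" "finite H"
    using assms(7) cv unfolding k_atom_def k_fragment_def k_admissible_def by auto
  have Hfr: "k_fragment G S k H" using assms(7) unfolding k_atom_def by blast
  have key: "(\<lambda>x. h \<otimes> x) ` H = H" if h: "h \<in> H" for h
  proof -
    let ?f = "\<lambda>x. h \<otimes> x"
    have hc: "h \<in> carrier G" using h Hc(1) by blast
    have at: "k_atom G S k (?f ` H)" by (rule translate_atom[OF hc assms(3) cv assms(7)])
    have inj: "inj_on ?f (carrier G)" using hc by (intro inj_onI) (metis l_cancel)
    have cH: "card (?f ` H) = card H" using inj Hc(1) by (metis card_image inj_on_subset)
    have Pc: "Pi_r G H \<subseteq> carrier G" unfolding Pi_r_def by blast
    have PH: "?f ` Pi_r G H \<subseteq> ?f ` H \<inter> H"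
    proof
      fix y assume "y \<in> ?f ` Pi_r G H"
      then obtain x where x: "x \<in> carrier G" "H #> x = H" "y = h \<otimes> x" unfolding Pi_r_def by blast
      have "h \<otimes> x \<in> H #> x" unfolding r_coset_def using h by blast
      then have yH: "y \<in> H" using x by simp
      have "\<one> \<otimes> x \<in> H #> x" unfolding r_coset_def using assms(8) by blast
      then have "x \<in> H" using x by simp
      then show "y \<in> ?f ` H \<inter> H" using yH x by blast
    qed
    have "card (?f ` Pi_r G H) = card (Pi_r G H)" using inj Pc by (metis card_image inj_on_subset)
    moreover have "card (?f ` Pi_r G H) \<le> card (?f ` H \<inter> H)" using PH Hc(2) by (intro card_mono) auto
    ultimately have kI: "k \<le> card (?f ` H \<inter> H)" using assms(10) by linarith
    have sub: "?f ` H \<subseteq> H"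
      by (rule atom_inter[OF assms(3) assms(2) cv assms(5) assms(9) at Hfr cH[symmetric] kI])
    show ?thesis using Hc(2) sub cH by (intro card_seteq) auto
  qed
  show ?thesis
  proof (rule subgroup.intro)
    show "H \<subseteq> carrier G" by (rule Hc(1))
    show "\<one> \<in> H" by (rule assms(8))
    fix x y assume x: "x \<in> H"
    show "inv x \<in> H"
    proof -
      have "\<one> \<in> (\<lambda>z. x \<otimes> z) ` H" using key[OF x] assms(8) by simp
      then obtain z where z: "z \<in> H" "\<one> = x \<otimes> z" by blast
      have xc: "x \<in> carrier G" "z \<in> carrier G" using x z Hc(1) by auto
      have "inv x = inv x \<otimes> (x \<otimes> z)" using z xc by simp
      also have "\<dots> = z" using xc by (simp add: m_assoc[symmetric])
      finally show ?thesis using z by simp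
    qed
    assume y: "y \<in> H"
    have "x \<otimes> y \<in> (\<lambda>z. x \<otimes> z) ` H" using y by blast
    then show "x \<otimes> y \<in> H" using key[OF x] by simp
  qed
qed

theorem mainTheorem6:
  fixes G :: "('a, 'b) monoid_scheme" and S H :: "'a set" and k :: nat
  assumes "group G"
    and "finite S" and "S \<subseteq> carrier G" and "generate G S = carrier G"
    and "\<one>\<^bsub>G\<^esub> \<in> S"
    and "k_separable G S k"
    and "k_atom G S k H" and "\<one>\<^bsub>G\<^esub> \<in> H"
    and "infinite (carrier G) \<or> alpha G S k \<le> alpha_neg G S k"
    and "k \<le> card (Pi_r G H)"
  shows "subgroup H G"
  using group.main_aux[OF assms(1) TrueI assms(2-10)] .


end
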